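(* Let $W_1,\dots,W_N$ be independent with $W_j\sim\mathrm{Bernoulli}(r_j)$. Let $\alpha_1,\dots,\alpha_N\ge0$ with $\sum_j\alpha_j=1$, and set $N_\alpha=1/\max_j\alpha_j$. Let $\hat r=\sum_j\alpha_jW_j$ and $r^*=\sum_j\alpha_jr_j$. Then for any $r$ with $0<r<r^*$, $$\Pr(\hat r<r)\le\exp\{-N_\alpha D(r\|r^* )\},$$ and for any $\tilde r$ with $r^*<\tilde r<1$, $$\Pr(\hat r>\tilde r)\le\exp\{-N_\alpha D(\tilde r\|r^* )\},$$ where $D(p\|q)=p\log\frac pq+(1-p)\log\frac{1-p}{1-q}$ is the relative entropy between Bernoulli$(p)$ and Bernoulli$(q)$. *)

theory Defs
  imports "HOL-Probability.Probability"
begin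

definition bern_kl :: "real \<Rightarrow> real \<Rightarrow> real" where
  "bern_kl p q = p * ln (p / q) + (1 - p) * ln ((1 - p) / (1 - q))"

end

theory Submission
  imports Defs
begin

lemma L1:
  fixes b a :: real assumes "0 \<le> b" "b \<le> 1"
  shows "exp (b*a) \<le> b * exp a + (1 - b)"
  using convex_onD[OF exp_convex, of b 0 a] assms by simp

lemma L2:
  fixes r b t :: real assumes "0 \<le> r" "r \<le> 1" "0 \<le> b" "b \<le> 1"
  shows "1 - r + r * exp (b*t) \<le> exp (b * ln (1 - r + r * exp t))"
proof -
  define A where "A = 1 - r + r * exp t"
  have Apos: "A > 0" unfolding A_def using assms
    by (smt (verit, ccfv_SIG) exp_gt_zero mult_nonneg_nonneg mult_pos_pos)
  define E where "E = exp (- (b * ln A))"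
  have E1: "E \<le> b / A + (1 - b)"
    using L1[OF assms(3,4), of "- ln A"] Apos by (simp add: E_def exp_minus ln_div[symmetric] field_simps)
  have E2: "exp (b*t) * E \<le> b * exp t / A + (1 - b)"
  proof -
    have "exp (b*t) * E = exp (b * (t - ln A))" by (simp add: E_def exp_add[symmetric] algebra_simps)
    also have "\<dots> \<le> b * exp (t - ln A) + (1 - b)" by (rule L1[OF assms(3,4)])
    also have "exp (t - ln A) = exp t / A" using Apos by (simp add: exp_diff)
    finally show ?thesis by simp
  qed
  have "(1 - r) * E + r * (exp (b*t) * E) \<le> (1-r) * (b / A + (1 - b)) + r * (b * exp t / A + (1 - b))"
    using E1 E2 assms by (intro add_mono mult_left_mono) auto
  also have "\<dots> = b * (1 - r + r * exp t) / A + (1 - b)" using Apos by (simp add: field_simps)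
  also have "\<dots> = b * A / A + (1 - b)" by (simp add: A_def)
  also have "\<dots> = 1" using Apos by simp
  finally have "(1 - r + r * exp (b*t)) * E \<le> 1" by (simp add: algebra_simps)
  hence H: "(1 - r + r * exp (b*t)) * E * exp (b * ln A) \<le> exp (b * ln A)"
    using mult_right_mono[of _ 1 "exp (b * ln A)"] by simp
  moreover have EE: "E * exp (b * ln A) = 1" by (simp add: E_def exp_minus)
  show ?thesis unfolding A_def[symmetric] using H EE by (metis mult.assoc mult_1_right)
qed

lemma L3:
  fixes S :: "'a set" and a x :: "'a \<Rightarrow> real"
  assumes "finite S" "S \<noteq> {}" "sum a S = 1" "\<And>i. i\<in>S \<Longrightarrow> a i \<ge> 0" "\<And>i. i\<in>S \<Longrightarrow> x i > 0"
  shows "(\<Sum>i\<in>S. a i * ln (x i)) \<le> ln (\<Sum>i\<in>S. a i * x i)"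
  using concave_on_sum[OF assms(1,2) ln_concave assms(3,4), of x] assms(5) by auto

lemma mgf:
  fixes N :: nat and rr alpha :: "nat \<Rightarrow> real" and l :: real
  assumes "N \<ge> 1"
    and rr: "\<And>j. j < N \<Longrightarrow> 0 \<le> rr j \<and> rr j \<le> 1"
    and al: "\<And>j. j < N \<Longrightarrow> alpha j \<ge> 0"
    and s1: "(\<Sum>j<N. alpha j) = 1"
  defines "m \<equiv> Max (alpha ` {..<N})"
    and "rs \<equiv> (\<Sum>j<N. alpha j * rr j)"
  shows "measure_pmf.expectation (Pi_pmf {..<N} False (\<lambda>j. bernoulli_pmf (rr j)))
           (\<lambda>w. \<Prod>j<N. exp (l * alpha j * (if w j then 1 else 0)))
         \<le> exp ((1/m) * ln (1 - rs + rs * exp (l*m)))"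
proof -
  have ne: "{..<N} \<noteq> {}" using assms(1) by (auto simp: lessThan_empty_iff)
  have alm: "alpha j \<le> m" if "j < N" for j unfolding m_def using that by (intro Max_ge) auto
  have mpos: "m > 0"
  proof (rule ccontr)
    assume "\<not> m > 0"
    hence "\<And>j. j < N \<Longrightarrow> alpha j = 0" using alm al by (meson antisym not_less order_trans)
    hence "(\<Sum>j<N. alpha j) = 0" by simp
    with s1 show False by simp
  qed
  define x where "x j = 1 - rr j + rr j * exp (l*m)" for j
  have xpos: "x j > 0" if "j < N" for j
    using rr[OF that] unfolding x_def
    by (smt (verit, ccfv_SIG) exp_gt_zero mult_nonneg_nonneg mult_pos_pos)
  have "measure_pmf.expectation (Pi_pmf {..<N} False (\<lambda>j. bernoulli_pmf (rr j)))
           (\<lambda>w. \<Prod>j<N. exp (l * alpha j * (if w j then 1 else 0)))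
        = (\<Prod>j<N. measure_pmf.expectation (bernoulli_pmf (rr j)) (\<lambda>v. exp (l * alpha j * (if v then 1 else 0))))"
    by (rule expectation_prod_Pi_pmf) (auto intro: integrable_measure_pmf_finite)
  also have "\<dots> = (\<Prod>j<N. 1 - rr j + rr j * exp ((alpha j / m) * (l*m)))"
    using rr mpos by (intro prod.cong) (auto simp: algebra_simps)
  also have "\<dots> \<le> (\<Prod>j<N. exp ((alpha j / m) * ln (x j)))"
  proof (rule prod_mono)
    fix j assume "j \<in> {..<N}"
    hence j: "j < N" by simp
    have b: "0 \<le> alpha j / m" "alpha j / m \<le> 1" using al[OF j] alm[OF j] mpos by auto
    show "0 \<le> 1 - rr j + rr j * exp ((alpha j / m) * (l*m)) \<and>
          1 - rr j + rr j * exp ((alpha j / m) * (l*m)) \<le> exp ((alpha j / m) * ln (x j))"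
      using L2[of "rr j" "alpha j / m" "l*m"] rr[OF j] b unfolding x_def
      by (smt (verit, ccfv_SIG) exp_gt_zero mult_nonneg_nonneg)
  qed
  also have "\<dots> = exp ((1/m) * (\<Sum>j<N. alpha j * ln (x j)))"
    by (simp add: exp_sum[symmetric] sum_distrib_left)
  also have "\<dots> \<le> exp ((1/m) * ln (\<Sum>j<N. alpha j * x j))"
  proof -
    have "(\<Sum>j<N. alpha j * ln (x j)) \<le> ln (\<Sum>j<N. alpha j * x j)"
      using L3[of "{..<N}" alpha x] ne s1 al xpos by auto
    thus ?thesis using mpos by (simp add: divide_right_mono)
  qed
  also have "(\<Sum>j<N. alpha j * x j) = 1 - rs + rs * exp (l*m)"
    unfolding x_def rs_def by (simp add: algebra_simps sum.distrib sum_subtractf sum_distrib_right sum_distrib_left s1)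
  finally show ?thesis .
qed

lemma klid:
  fixes rs x :: real
  assumes "0 < rs" "rs < 1" "0 < x" "x < 1"
  shows "ln (1 - rs + rs * exp (ln (x*(1-rs)/(rs*(1-x))))) - ln (x*(1-rs)/(rs*(1-x))) * x = - bern_kl x rs"
proof -
  define q where "q = x*(1-rs)/(rs*(1-x))"
  have q: "q > 0" using assms by (auto simp: q_def)
  have "1 - rs + rs * exp (ln q) = (1 - rs)/(1 - x)"
    using q assms by (simp add: q_def field_simps)
  hence e1: "ln (1 - rs + rs * exp (ln q)) = ln (1-rs) - ln (1-x)"
    using assms by (simp add: ln_div)
  have e2: "ln q = ln x + ln (1-rs) - ln rs - ln (1-x)"
    using assms by (simp add: q_def ln_div ln_mult)
  have e3: "bern_kl x rs = x * (ln x - ln rs) + (1-x) * (ln (1-x) - ln (1-rs))"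
    using assms by (simp add: bern_kl_def ln_div)
  have "ln (1 - rs + rs * exp (ln q)) - ln q * x = - bern_kl x rs"
    by (subst e1) (simp add: e2 e3 algebra_simps)
  thus ?thesis by (simp only: q_def)
qed

theorem mainTheorem8:
  fixes N :: nat and rr alpha :: "nat \<Rightarrow> real" and r r' :: real
  assumes "N \<ge> 1"
    and "\<And>j. j < N \<Longrightarrow> 0 \<le> rr j \<and> rr j \<le> 1"
    and "\<And>j. j < N \<Longrightarrow> alpha j \<ge> 0"
    and "(\<Sum>j<N. alpha j) = 1"
  defines "Nalpha \<equiv> 1 / Max (alpha ` {..<N})"
    and "rstar \<equiv> (\<Sum>j<N. alpha j * rr j)"
    and "W \<equiv> Pi_pmf {..<N} False (\<lambda>j. bernoulli_pmf (rr j))"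
    and "rhat \<equiv> (\<lambda>w :: nat \<Rightarrow> bool. \<Sum>j<N. alpha j * (if w j then 1 else 0))"
  shows "(0 < r \<and> r < rstar \<longrightarrow>
           measure_pmf.prob W {w. rhat w < r} \<le> exp (- Nalpha * bern_kl r rstar))
       \<and> (rstar < r' \<and> r' < 1 \<longrightarrow>
           measure_pmf.prob W {w. rhat w > r'} \<le> exp (- Nalpha * bern_kl r' rstar))"
proof -
  note rr = assms(2) and al = assms(3) and s1 = assms(4)
  define m where "m = Max (alpha ` {..<N})"
  have Na: "Nalpha = 1/m" unfolding Nalpha_def m_def ..
  have alm: "alpha j \<le> m" if "j < N" for j unfolding m_def using that by (intro Max_ge) auto
  have mpos: "m > 0"
  proof (rule ccontr)
    assume "\<not> m > 0"
    hence "\<And>j. j < N \<Longrightarrow> alpha j = 0" using alm al by (meson antisym not_less order_trans)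
    hence "(\<Sum>j<N. alpha j) = 0" by simp
    with s1 show False by simp
  qed
  have rs0: "rstar \<ge> 0" unfolding rstar_def using rr al by (intro sum_nonneg) auto
  have "rstar \<le> (\<Sum>j<N. alpha j)" unfolding rstar_def using rr al
    by (intro sum_mono) (simp add: mult_left_le)
  hence rs1: "rstar \<le> 1" using s1 by simp
  have expeq: "exp (l * rhat w) = (\<Prod>j<N. exp (l * alpha j * (if w j then 1 else 0)))" for l w
    unfolding rhat_def by (simp add: exp_sum[symmetric] sum_distrib_left mult.assoc)
  have chern: "measure_pmf.prob W S \<le> exp (- Nalpha * bern_kl x rstar)"
    if x: "0 < x" "x < 1" and rsb: "0 < rstar" "rstar < 1"
      and S: "S \<subseteq> {w. exp ((ln (x*(1-rstar)/(rstar*(1-x))) / m) * x)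
                         \<le> exp ((ln (x*(1-rstar)/(rstar*(1-x))) / m) * rhat w)}" for S x
  proof -
    define t where "t = ln (x*(1-rstar)/(rstar*(1-x)))"
    define l where "l = t / m"
    have lm: "l * m = t" using mpos by (simp add: l_def)
    let ?u = "\<lambda>w. exp (l * rhat w)"
    have int: "integrable (measure_pmf W) ?u"
      unfolding W_def expeq
      by (rule integrable_prod_Pi_pmf) (auto intro: integrable_measure_pmf_finite)
    have "measure_pmf.prob W S \<le> measure_pmf.prob W {w \<in> space (measure_pmf W). ?u w \<ge> exp (l * x)}"
      using S by (intro measure_pmf.finite_measure_mono) (auto simp: l_def t_def)
    also have "\<dots> \<le> measure_pmf.expectation W ?u / exp (l * x)"
      by (rule integral_Markov_inequality_measure[OF int, of UNIV]) auto
    also have "measure_pmf.expectation W ?u \<le> exp ((1/m) * ln (1 - rstar + rstar * exp t))"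
      unfolding expeq W_def rstar_def m_def[symmetric] lm[symmetric]
      using mgf[OF assms(1-4), where l=l] unfolding m_def by simp
    hence "measure_pmf.expectation W ?u / exp (l * x) \<le> exp ((1/m) * ln (1 - rstar + rstar * exp t)) / exp (l * x)"
      by (simp add: divide_right_mono)
    also have "\<dots> = exp ((1/m) * (ln (1 - rstar + rstar * exp t) - t * x))"
      by (simp add: exp_diff[symmetric] l_def algebra_simps)
    also have "\<dots> = exp (- Nalpha * bern_kl x rstar)"
      using klid[OF rsb x] unfolding t_def Na by simp
    finally show ?thesis by simp
  qed
  show ?thesis
  proof (intro conjI impI)
    assume h: "0 < r \<and> r < rstar"
    show "measure_pmf.prob W {w. rhat w < r} \<le> exp (- Nalpha * bern_kl r rstar)"
    proof (cases "rstar = 1")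
      case True
      have "bern_kl r rstar = r * ln r" using True by (simp add: bern_kl_def)
      also have "\<dots> \<le> 0" using h True by (intro mult_nonneg_nonpos) auto
      finally have "exp (- Nalpha * bern_kl r rstar) \<ge> 1" using mpos Na
        by (simp add: divide_nonpos_pos)
      thus ?thesis by (meson measure_pmf.prob_le_1 order_trans)
    next
      case False
      hence rsb: "0 < rstar" "rstar < 1" using rs1 h by auto
      have "r*(1-rstar)/(rstar*(1-r)) < 1" using h rsb by (simp add: field_simps)
      hence neg: "ln (r*(1-rstar)/(rstar*(1-r))) / m < 0" using h rsb mpos
        by (simp add: divide_neg_pos)
      define c where "c = ln (r*(1-rstar)/(rstar*(1-r))) / m"
      have "{w. rhat w < r} \<subseteq> {w. exp (c * r) \<le> exp (c * rhat w)}"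
      proof
        fix w assume "w \<in> {w. rhat w < r}"
        hence "c * r \<le> c * rhat w" using neg unfolding c_def by (intro mult_left_mono_neg) auto
        thus "w \<in> {w. exp (c * r) \<le> exp (c * rhat w)}" by simp
      qed
      thus ?thesis using h rsb by (intro chern) (auto simp: c_def)
    qed
  next
    assume h: "rstar < r' \<and> r' < 1"
    show "measure_pmf.prob W {w. rhat w > r'} \<le> exp (- Nalpha * bern_kl r' rstar)"
    proof (cases "rstar = 0")
      case True
      have "bern_kl r' rstar = (1 - r') * ln (1 - r')" using True by (simp add: bern_kl_def)
      also have "\<dots> \<le> 0" using h True by (intro mult_nonneg_nonpos) auto
      finally have "exp (- Nalpha * bern_kl r' rstar) \<ge> 1" using mpos Na
        by (simp add: divide_nonpos_pos)
      thus ?thesis by (meson measure_pmf.prob_le_1 order_trans)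
    next
      case False
      hence rsb: "0 < rstar" "rstar < 1" using rs0 h by auto
      have "r'*(1-rstar)/(rstar*(1-r')) > 1" using h rsb by (simp add: field_simps)
      hence pos: "ln (r'*(1-rstar)/(rstar*(1-r'))) / m > 0" using h rsb mpos
        by simp
      define c where "c = ln (r'*(1-rstar)/(rstar*(1-r'))) / m"
      have "{w. rhat w > r'} \<subseteq> {w. exp (c * r') \<le> exp (c * rhat w)}"
      proof
        fix w assume "w \<in> {w. rhat w > r'}"
        hence "c * r' \<le> c * rhat w" using pos unfolding c_def by (intro mult_left_mono) auto
        thus "w \<in> {w. exp (c * r') \<le> exp (c * rhat w)}" by simp
      qed
      thus ?thesis using h rsb rs0 by (intro chern) (auto simp: c_def)
    qed
  qed
qed

end
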